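(* Let $(X_i)_{i=1}^\infty$ be independent random variables with $X_i\sim\mathrm{Exp}(i)$, and let $M=\sup_{i\ge1}X_i$. Then $$E(M)=\frac{4\sqrt3}{3}\pi-6\approx 1.255,\qquad V(M)=-\frac{28}{3}\pi^2-16\sqrt3\,\pi+180\approx 0.821 .$$
   Context: $\mathrm{Exp}(\lambda)$ denotes the exponential distribution with rate $\lambda$, i.e. density $\lambda e^{-\lambda x}$ on $x\ge0$. $M$ is almost surely finite; its distribution function is $P(M\le t)=\prod_{m=1}^\infty(1-e^{-mt})$ for $t\ge0$. $V$ denotes variance. *)

theory Defs
  imports "HOL-Probability.Probability"
begin

end

theory Submission
  imports Defs "HOL-Analysis.Analysis"
begin

lemma pos_not_nonpos_Int: "(x::real) > 0 \<Longrightarrow> x \<notin> \<int>\<^sub>\<le>\<^sub>0"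
  using nonpos_Ints_nonpos by fastforce

lemma Gamma_refl_real:
  assumes "0 < x" "x < 1"
  shows "Gamma x * Gamma (1 - x) = pi / sin (pi * x)"
proof -
  have "complex_of_real (Gamma x * Gamma (1 - x)) = Gamma (of_real x) * Gamma (1 - of_real x)"
    by (simp add: Gamma_complex_of_real[symmetric])
  also have "\<dots> = of_real pi / sin (of_real pi * of_real x)"
    by (rule Gamma_reflection_complex)
  also have "\<dots> = complex_of_real (pi / sin (pi * x))"
    by (simp add: sin_of_real[symmetric])
  finally show ?thesis by (simp only: of_real_eq_iff)
qed

lemma sin_pi_pos: "0 < x \<Longrightarrow> x < 1 \<Longrightarrow> sin (pi * x) > 0"
  by (rule sin_gt_zero) auto

lemma Digamma_refl_real:
  assumes "0 < x" "x < 1"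
  shows "Digamma x - Digamma (1 - x) = - pi * cos (pi * x) / sin (pi * x)"
proof -
  let ?f = "\<lambda>y::real. Gamma y * Gamma (1 - y)"
  let ?g = "\<lambda>y::real. pi / sin (pi * y)"
  have s: "sin (pi * x) > 0" using assms by (intro sin_pi_pos)
  have G1: "Gamma x > 0" "Gamma (1 - x) > 0" using assms by auto
  have df: "(?f has_field_derivative (Gamma x * Digamma x * Gamma (1 - x) + Gamma x * (Gamma (1 - x) * Digamma (1 - x) * (-1)))) (at x)"
    using assms by (auto intro!: derivative_eq_intros pos_not_nonpos_Int)
  have dg: "(?g has_field_derivative (- pi * (cos (pi * x) * pi) / (sin (pi * x))\<^sup>2)) (at x)"
    using s by (auto intro!: derivative_eq_intros simp: power2_eq_square)
  have dg': "(?f has_field_derivative (- pi * (cos (pi * x) * pi) / (sin (pi * x))\<^sup>2)) (at x)"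
    by (rule has_field_derivative_transform_within_open[OF dg, of "{0<..<1}"]) (use assms in \<open>auto simp: Gamma_refl_real\<close>)
  have eq: "Gamma x * Digamma x * Gamma (1 - x) + Gamma x * (Gamma (1 - x) * Digamma (1 - x) * (-1))
        = - pi * (cos (pi * x) * pi) / (sin (pi * x))\<^sup>2"
    using DERIV_unique[OF df dg'] .
  hence "(Gamma x * Gamma (1 - x)) * (Digamma x - Digamma (1 - x)) = - pi * (cos (pi * x) * pi) / (sin (pi * x))\<^sup>2"
    by (simp add: algebra_simps)
  hence "(pi / sin (pi * x)) * (Digamma x - Digamma (1 - x)) = - pi * (cos (pi * x) * pi) / (sin (pi * x))\<^sup>2"
    using assms by (simp add: Gamma_refl_real)
  note h = this
  have "Digamma x - Digamma (1 - x) = (sin (pi * x) / pi) * ((pi / sin (pi * x)) * (Digamma x - Digamma (1 - x)))"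
    using s pi_gt_zero by (simp add: field_simps)
  also have "\<dots> = (sin (pi * x) / pi) * (- pi * (cos (pi * x) * pi) / (sin (pi * x))\<^sup>2)"
    by (simp only: h)
  also have "\<dots> = - pi * cos (pi * x) / sin (pi * x)"
    using s pi_gt_zero by (simp add: field_simps power2_eq_square)
  finally show ?thesis .
qed

lemma Trigamma_refl_real:
  assumes "0 < x" "x < 1"
  shows "Polygamma 1 x + Polygamma 1 (1 - x) = pi\<^sup>2 / (sin (pi * x))\<^sup>2"
proof -
  let ?f = "\<lambda>y::real. Digamma y - Digamma (1 - y)"
  let ?g = "\<lambda>y::real. - pi * cos (pi * y) / sin (pi * y)"
  have s: "sin (pi * x) > 0" using assms by (intro sin_pi_pos)
  have df: "(?f has_field_derivative (Polygamma 1 x - Polygamma 1 (1 - x) * (-1))) (at x)"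
    using assms by (auto intro!: derivative_eq_intros pos_not_nonpos_Int)
  have dg: "(?g has_field_derivative (pi\<^sup>2 / (sin (pi * x))\<^sup>2)) (at x)"
  proof -
    have "(?g has_field_derivative ((- pi * (- sin (pi * x) * pi)) * sin (pi * x) - (- pi * cos (pi * x)) * (cos (pi * x) * pi)) / (sin (pi * x) * sin (pi * x))) (at x)"
      using s by (intro derivative_eq_intros refl) auto
    also have "((- pi * (- sin (pi * x) * pi)) * sin (pi * x) - (- pi * cos (pi * x)) * (cos (pi * x) * pi)) / (sin (pi * x) * sin (pi * x))
       = pi\<^sup>2 / (sin (pi * x))\<^sup>2"
      using s by (simp add: field_simps power2_eq_square) (insert sin_cos_squared_add3[of "pi * x"], algebra)
    finally show ?thesis .
  qed
  have dg': "(?f has_field_derivative (pi\<^sup>2 / (sin (pi * x))\<^sup>2)) (at x)"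
    by (rule has_field_derivative_transform_within_open[OF dg, of "{0<..<1}"]) (use assms in \<open>auto simp: Digamma_refl_real\<close>)
  have "Polygamma 1 x - Polygamma 1 (1 - x) * (-1) = pi\<^sup>2 / (sin (pi * x))\<^sup>2"
    using DERIV_unique[OF df dg'] .
  thus ?thesis by simp
qed



fun tri :: "nat \<Rightarrow> nat" where
  "tri 0 = 0" | "tri (Suc k) = tri k + Suc k"

definition pb :: "nat \<Rightarrow> nat" where "pb k = k * k + tri k"
fun pa :: "nat \<Rightarrow> nat" where "pa 0 = 0" | "pa (Suc n) = tri n + Suc n * Suc n"

lemma tri_real: "2 * real (tri k) = real k * (real k + 1)"
  by (induction k) (auto simp: algebra_simps)

definition shP :: "real \<Rightarrow> nat \<Rightarrow> nat \<Rightarrow> real" where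
  "shP q n k = (\<Prod>m\<in>{k<..n}. (1 - q ^ m))"
definition shT :: "real \<Rightarrow> nat \<Rightarrow> nat \<Rightarrow> real" where
  "shT q n k = shP q n k * q ^ (n * k + tri k)"
definition shS :: "real \<Rightarrow> nat \<Rightarrow> real" where
  "shS q n = (\<Sum>k\<le>n. (-1) ^ k * shT q n k)"
definition shR :: "real \<Rightarrow> nat \<Rightarrow> real" where
  "shR q n = 1 + (\<Sum>k\<in>{1..n}. (-1) ^ k * (q ^ pb k + q ^ pa k))"

lemma shR_Suc: "shR q (Suc n) = shR q n + (-1) ^ Suc n * (q ^ pb (Suc n) + q ^ pa (Suc n))"
  unfolding shR_def by simp

lemma shS_Suc: "shS q (Suc n) = shS q n + (-1) ^ Suc n * (q ^ pb (Suc n) + q ^ pa (Suc n))"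
proof -
  define U where "U k = (\<Prod>m\<in>{k..n}. (1 - q ^ m)) * q ^ (tri k + n * k)" for k
  have step: "(-1) ^ k * (shT q (Suc n) k - shT q n k) = (-1) ^ Suc k * U (Suc k) - (-1) ^ k * U k"
    if "k \<le> n" for k
  proof -
    define Q where "Q = shP q n k * q ^ (n * k + tri k)"
    have e1: "{k<..Suc n} = insert (Suc n) {k<..n}" using that by auto
    have P1: "shP q (Suc n) k = shP q n k * (1 - q ^ Suc n)"
      unfolding shP_def e1 by (simp add: mult.commute)
    have e2: "{k..n} = insert k {k<..n}" using that by auto
    have U0: "U k = (1 - q ^ k) * Q"
      unfolding U_def Q_def e2 shP_def by (simp add: algebra_simps)
    have e3: "{Suc k..n} = {k<..n}" by auto
    have U1: "U (Suc k) = Q * q ^ (k + 1 + n)"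
      unfolding U_def Q_def e3 shP_def by (simp add: algebra_simps power_add)
    have T1: "shT q (Suc n) k = (1 - q ^ Suc n) * Q * q ^ k"
      unfolding shT_def P1 Q_def by (simp add: algebra_simps power_add)
    have T0: "shT q n k = Q" unfolding shT_def Q_def ..
    show ?thesis unfolding T1 T0 U0 U1 by (simp add: algebra_simps power_add)
  qed
  have "(\<Sum>k\<le>n. (-1) ^ k * (shT q (Suc n) k - shT q n k)) = (\<Sum>k<Suc n. (-1) ^ Suc k * U (Suc k) - (-1) ^ k * U k)"
    using step by (simp add: lessThan_Suc_atMost)
  also have "\<dots> = (-1) ^ Suc n * U (Suc n) - U 0"
    by (subst sum_lessThan_telescope) simp
  also have "U 0 = 0" unfolding U_def by (simp add: prod_zero_iff) (rule bexI[of _ 0], auto)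
  also have "U (Suc n) = q ^ pa (Suc n)"
    unfolding U_def by (simp add: algebra_simps)
  finally have A: "(\<Sum>k\<le>n. (-1) ^ k * shT q (Suc n) k) = shS q n + (-1) ^ Suc n * q ^ pa (Suc n)"
    unfolding shS_def by (simp add: sum_subtractf algebra_simps)
  have "shS q (Suc n) = (\<Sum>k\<le>n. (-1) ^ k * shT q (Suc n) k) + (-1) ^ Suc n * shT q (Suc n) (Suc n)"
    unfolding shS_def by simp
  also have "shT q (Suc n) (Suc n) = q ^ pb (Suc n)"
    unfolding shT_def shP_def pb_def by (simp add: algebra_simps)
  finally show ?thesis using A by (simp add: algebra_simps)
qed

lemma shanks: "shS q n = shR q n"
  by (induction n) (simp_all add: shS_Suc shR_Suc, simp add: shS_def shR_def shT_def shP_def)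

lemma shP_bounds: "0 \<le> q \<Longrightarrow> q \<le> 1 \<Longrightarrow> 0 \<le> shP q n k \<and> shP q n k \<le> 1"
  unfolding shP_def
  by (auto intro!: prod_nonneg prod_le_1 simp: power_le_one)

lemma shanks_lim:
  assumes "0 \<le> q" "q < 1"
  shows "(\<lambda>n. shR q n - (\<Prod>m\<in>{1..n}. 1 - q ^ m)) \<longlonglongrightarrow> 0"
proof (rule Lim_null_comparison)
  show "(\<lambda>n. of_nat n * q ^ n) \<longlonglongrightarrow> 0"
    by (rule powser_times_n_limit_0) (use assms in auto)
  show "\<forall>\<^sub>F n in sequentially. norm (shR q n - (\<Prod>m\<in>{1..n}. 1 - q ^ m)) \<le> of_nat n * q ^ n"
  proof (intro always_eventually allI)
    fix n :: nat
    have e: "{..n} = insert 0 {1..n}" by (auto simp: not_le less_one)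
    have "shR q n = shS q n" by (simp add: shanks)
    also have "\<dots> = (\<Prod>m\<in>{1..n}. 1 - q ^ m) + (\<Sum>k\<in>{1..n}. (-1) ^ k * shT q n k)"
      unfolding shS_def e by (simp add: shT_def shP_def greaterThan_0 atLeastSucAtMost_greaterThanAtMost)
    finally have "shR q n - (\<Prod>m\<in>{1..n}. 1 - q ^ m) = (\<Sum>k\<in>{1..n}. (-1) ^ k * shT q n k)" by simp
    also have "norm \<dots> \<le> (\<Sum>k\<in>{1..n}. norm ((-1) ^ k * shT q n k))" by (rule norm_sum)
    also have "\<dots> \<le> (\<Sum>k\<in>{1..n}. q ^ n)"
    proof (rule sum_mono)
      fix k assume k: "k \<in> {1..n}"
      have b: "0 \<le> shP q n k" "shP q n k \<le> 1" using shP_bounds[of q n k] assms by auto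
      have "q ^ (n * k + tri k) \<le> q ^ n"
        by (rule power_decreasing) (use assms k in \<open>auto simp: trans_le_add1\<close>)
      moreover have "q ^ (n * k + tri k) \<ge> 0" using assms by simp
      ultimately show "norm ((-1) ^ k * shT q n k) \<le> q ^ n"
        unfolding shT_def using b by (simp add: abs_mult mult_le_one) (meson mult_left_le_one_le order_trans zero_le_power assms(1) b)
    qed
    also have "\<dots> = of_nat n * q ^ n" by simp
    finally show "norm (shR q n - (\<Prod>m\<in>{1..n}. 1 - q ^ m)) \<le> of_nat n * q ^ n" .
  qed
qed

lemma shR_even: "shR (q::real) (2 * N) = 1 - (\<Sum>j<N. (q ^ pb (2*j+1) + q ^ pa (2*j+1)) - (q ^ pb (2*j+2) + q ^ pa (2*j+2)))"
proof (induction N)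
  case 0 thus ?case by (simp add: shR_def)
next
  case (Suc N)
  have "shR q (2 * Suc N) = shR q (Suc (Suc (2 * N)))" by simp
  also have "\<dots> = shR q (2 * N) - (q ^ pb (2*N+1) + q ^ pa (2*N+1)) + (q ^ pb (2*N+2) + q ^ pa (2*N+2))"
    by (simp add: shR_Suc)
  finally show ?case using Suc by simp
qed

lemma pent_sums:
  assumes "0 \<le> (q::real)" "q < 1" and lim: "(\<lambda>n. \<Prod>m\<in>{1..n}. 1 - q ^ m) \<longlonglongrightarrow> L"
  shows "(\<lambda>j. (q ^ pb (2*j+1) + q ^ pa (2*j+1)) - (q ^ pb (2*j+2) + q ^ pa (2*j+2))) sums (1 - L)"
proof -
  have "(\<lambda>n. (shR q n - (\<Prod>m\<in>{1..n}. 1 - q ^ m)) + (\<Prod>m\<in>{1..n}. 1 - q ^ m)) \<longlonglongrightarrow> 0 + L"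
    by (intro tendsto_add shanks_lim lim assms)
  hence R: "(\<lambda>n. shR q n) \<longlonglongrightarrow> L" by simp
  have "(\<lambda>N. shR q (2 * N)) \<longlonglongrightarrow> L"
    by (rule LIMSEQ_subseq_LIMSEQ[OF R, unfolded comp_def]) (simp add: strict_mono_def)
  hence "(\<lambda>N. 1 - shR q (2 * N)) \<longlonglongrightarrow> 1 - L" by (intro tendsto_diff tendsto_const)
  thus ?thesis unfolding sums_def shR_even by simp
qed



lemma dig_diff_sums:
  assumes "a > 0" "b > 0"
  shows "(\<lambda>j. 1 / (real j + a) - 1 / (real j + b)) sums (Digamma b - Digamma (a::real))"
proof -
  have sa: "(\<lambda>k. inverse (of_nat (Suc k)) - inverse (a + of_nat k)) sums (Digamma a + euler_mascheroni)"
    using summable_Digamma[of a] assms by (simp add: Digamma_def summable_sums)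
  have sb: "(\<lambda>k. inverse (of_nat (Suc k)) - inverse (b + of_nat k)) sums (Digamma b + euler_mascheroni)"
    using summable_Digamma[of b] assms by (simp add: Digamma_def summable_sums)
  from sums_diff[OF sb sa] show ?thesis
    by (simp add: inverse_eq_divide add.commute)
qed

lemma trig_sums:
  assumes "a > 0"
  shows "(\<lambda>j. 1 / (real j + a)\<^sup>2) sums (Polygamma 1 (a::real))"
  using Polygamma_LIMSEQ[of a 1] assms by (simp add: inverse_eq_divide add.commute power2_eq_square)

lemma Dig_13: "Digamma (2/3) - Digamma (1/3::real) = pi / sqrt 3"
proof -
  have "Digamma (1/3) - Digamma (1 - 1/3::real) = - pi * cos (pi * (1/3)) / sin (pi * (1/3))"
    by (rule Digamma_refl_real) auto
  also have "pi * (1/3) = pi / 3" by simp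
  finally show ?thesis by (simp add: sin_60 cos_60 field_simps)
qed

lemma Dig_16: "Digamma (5/6) - Digamma (7/6::real) = pi * sqrt 3 - 6"
proof -
  have "Digamma (1/6) - Digamma (1 - 1/6::real) = - pi * cos (pi * (1/6)) / sin (pi * (1/6))"
    by (rule Digamma_refl_real) auto
  also have "pi * (1/6) = pi / 6" by simp
  finally have h: "Digamma (1/6) - Digamma (5/6::real) = - pi * sqrt 3" by (simp add: sin_30 cos_30 field_simps)
  have "Digamma (1/6 + 1 :: real) = Digamma (1/6) + 1 / (1/6)" by (rule Digamma_plus1) simp
  hence "Digamma (7/6 :: real) = Digamma (1/6) + 6" by simp
  with h show ?thesis by simp
qed

lemma Tri_13: "Polygamma 1 (1/3) + Polygamma 1 (2/3::real) = 4 * pi\<^sup>2 / 3"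
proof -
  have "Polygamma 1 (1/3) + Polygamma 1 (1 - 1/3::real) = pi\<^sup>2 / (sin (pi * (1/3)))\<^sup>2"
    by (rule Trigamma_refl_real) auto
  also have "pi * (1/3) = pi / 3" by simp
  finally show ?thesis by (simp add: sin_60 power_divide)
qed

lemma Tri_56: "Polygamma 1 (5/6) + Polygamma 1 (7/6::real) = 4 * pi\<^sup>2 - 36"
proof -
  have "Polygamma 1 (1/6) + Polygamma 1 (1 - 1/6::real) = pi\<^sup>2 / (sin (pi * (1/6)))\<^sup>2"
    by (rule Trigamma_refl_real) auto
  also have "pi * (1/6) = pi / 6" by simp
  finally have h: "Polygamma 1 (1/6) + Polygamma 1 (5/6::real) = 4 * pi\<^sup>2" by (simp add: sin_30 power_divide)
  have "Polygamma 1 (1/6 + 1 :: real) = Polygamma 1 (1/6) + (-1) ^ 1 * fact 1 / ((1/6) ^ Suc 1)"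
    by (rule Polygamma_plus1) simp
  hence "Polygamma 1 (7/6 :: real) = Polygamma 1 (1/6) - 36" by simp
  with h show ?thesis by simp
qed

lemma Tri_12: "Polygamma 1 (1/2::real) = pi\<^sup>2 / 2"
proof -
  have "Polygamma 1 (1/2) + Polygamma 1 (1 - 1/2::real) = pi\<^sup>2 / (sin (pi * (1/2)))\<^sup>2"
    by (rule Trigamma_refl_real) auto
  thus ?thesis by simp
qed



lemma pb_real: "real (pb k) = real k * (3 * real k + 1) / 2"
  using tri_real[of k] unfolding pb_def by (simp add: algebra_simps)

lemma pa_real: "real (pa k) = real k * (3 * real k - 1) / 2"
proof (cases k)
  case 0 thus ?thesis by simp
next
  case (Suc n)
  thus ?thesis using tri_real[of n] by (simp add: algebra_simps)
qed

lemma pent_vals: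
  "real (pb (2*j+1)) = (2 * real j + 1) * (3 * real j + 2)"
  "real (pa (2*j+1)) = (2 * real j + 1) * (3 * real j + 1)"
  "real (pb (2*j+2)) = (real j + 1) * (6 * real j + 7)"
  "real (pa (2*j+2)) = (real j + 1) * (6 * real j + 5)"
  by (simp_all only: pb_real pa_real) (simp_all add: algebra_simps)

definition Eval :: real where "Eval = 4 * sqrt 3 / 3 * pi - 6"

lemma m1_term:
  fixes x :: real assumes x: "x \<ge> 0"
  shows "(1 / ((2*x+1)*(3*x+2)) + 1 / ((2*x+1)*(3*x+1))) - (1 / ((x+1)*(6*x+7)) + 1 / ((x+1)*(6*x+5)))
    = (1 / (x + 1/3) - 1 / (x + 2/3)) + (1 / (x + 7/6) - 1 / (x + 5/6))"
proof -
  have h: "2*x+1 \<noteq> 0" "3*x+2 \<noteq> 0" "3*x+1 \<noteq> 0" "x+1 \<noteq> 0" "6*x+7 \<noteq> 0" "6*x+5 \<noteq> 0"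
     "x + 1/3 \<noteq> 0" "x + 2/3 \<noteq> 0" "x + 7/6 \<noteq> 0" "x + 5/6 \<noteq> 0" using x by linarith+
  show ?thesis
    using x by (simp add: divide_simps h) (simp add: algebra_simps)
qed

lemma m1_sums:
  "(\<lambda>j. (1 / real (pb (2*j+1)) + 1 / real (pa (2*j+1))) - (1 / real (pb (2*j+2)) + 1 / real (pa (2*j+2)))) sums Eval"
proof -
  have s: "(\<lambda>j. (1 / (real j + 1/3) - 1 / (real j + 2/3)) + (1 / (real j + 7/6) - 1 / (real j + 5/6)))
     sums ((Digamma (2/3) - Digamma (1/3)) + (Digamma (5/6) - Digamma (7/6)))"
    by (intro sums_add dig_diff_sums) auto
  have v: "(Digamma (2/3) - Digamma (1/3)) + (Digamma (5/6) - Digamma (7/6::real)) = Eval"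
    unfolding Dig_13 Dig_16 Eval_def by (simp add: field_simps)
  show ?thesis using s unfolding v pent_vals
    by (subst m1_term) auto
qed

lemma pf_gen:
  fixes x u v :: real
  assumes "x + u > 0" "x + v > 0" "u \<noteq> v"
  shows "1 / ((x + u) * (x + v))\<^sup>2 = (1/(v-u))\<^sup>2 * (1 / (x + u)\<^sup>2 + 1 / (x + v)\<^sup>2) - 2 * (1/(v-u))^3 * (1 / (x + u) - 1 / (x + v))"
proof -
  have h: "x + u \<noteq> 0" "x + v \<noteq> 0" "v - u \<noteq> 0" "v \<noteq> u" using assms by auto
  show ?thesis using h by (simp add: divide_simps) algebra
qed

lemma m2_term:
  fixes x :: real assumes x: "x \<ge> 0"
  shows "(2 / ((2*x+1)*(3*x+2))\<^sup>2 + 2 / ((2*x+1)*(3*x+1))\<^sup>2) - (2 / ((x+1)*(6*x+7))\<^sup>2 + 2 / ((x+1)*(6*x+5))\<^sup>2)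
    = 2 * (1 / (x + 1/3)\<^sup>2 + 1 / (x + 2/3)\<^sup>2) - 2 * (1 / (x + 5/6)\<^sup>2 + 1 / (x + 7/6)\<^sup>2)
      + 4 * (1 / (x + 1/2)\<^sup>2) - 4 * (1 / (x + 1)\<^sup>2)
      - 24 * ((1 / (x + 1/3) - 1 / (x + 2/3)) + (1 / (x + 7/6) - 1 / (x + 5/6)))"
proof -
  have e1: "(2*x+1)*(3*x+2) = 6 * ((x + 1/2) * (x + 2/3))" by (simp add: algebra_simps)
  have e2: "(2*x+1)*(3*x+1) = 6 * ((x + 1/3) * (x + 1/2))" by (simp add: algebra_simps)
  have e3: "(x+1)*(6*x+7) = 6 * ((x + 1) * (x + 7/6))" by (simp add: algebra_simps)
  have e4: "(x+1)*(6*x+5) = 6 * ((x + 5/6) * (x + 1))" by (simp add: algebra_simps)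
  have p1: "1 / ((x + 1/2) * (x + 2/3))\<^sup>2 = 36 * (1 / (x + 1/2)\<^sup>2 + 1 / (x + 2/3)\<^sup>2) - 432 * (1 / (x + 1/2) - 1 / (x + 2/3))"
    using pf_gen[of x "1/2" "2/3"] x by simp
  have p2: "1 / ((x + 1/3) * (x + 1/2))\<^sup>2 = 36 * (1 / (x + 1/3)\<^sup>2 + 1 / (x + 1/2)\<^sup>2) - 432 * (1 / (x + 1/3) - 1 / (x + 1/2))"
    using pf_gen[of x "1/3" "1/2"] x by simp
  have p3: "1 / ((x + 1) * (x + 7/6))\<^sup>2 = 36 * (1 / (x + 1)\<^sup>2 + 1 / (x + 7/6)\<^sup>2) - 432 * (1 / (x + 1) - 1 / (x + 7/6))"
    using pf_gen[of x "1" "7/6"] x by simp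
  have p4: "1 / ((x + 5/6) * (x + 1))\<^sup>2 = 36 * (1 / (x + 5/6)\<^sup>2 + 1 / (x + 1)\<^sup>2) - 432 * (1 / (x + 5/6) - 1 / (x + 1))"
    using pf_gen[of x "5/6" "1"] x by simp
  have q: "\<And>a::real. 2 / (6 * a)\<^sup>2 = (1/18) * (1 / a\<^sup>2)" by (simp add: power_mult_distrib)
  show ?thesis
    unfolding e1 e2 e3 e4 q p1 p2 p3 p4 by (simp add: algebra_simps)
qed

definition Qval :: real where "Qval = 72 - 4 * pi\<^sup>2 - 24 * Eval"

lemma m2_sums:
  "(\<lambda>j. (2 / (real (pb (2*j+1)))\<^sup>2 + 2 / (real (pa (2*j+1)))\<^sup>2) - (2 / (real (pb (2*j+2)))\<^sup>2 + 2 / (real (pa (2*j+2)))\<^sup>2)) sums Qval"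
proof -
  have d: "(\<lambda>j. (1 / (real j + 1/3) - 1 / (real j + 2/3)) + (1 / (real j + 7/6) - 1 / (real j + 5/6)))
     sums Eval"
  proof -
    have s: "(\<lambda>j. (1 / (real j + 1/3) - 1 / (real j + 2/3)) + (1 / (real j + 7/6) - 1 / (real j + 5/6)))
       sums ((Digamma (2/3) - Digamma (1/3)) + (Digamma (5/6) - Digamma (7/6)))"
      by (intro sums_add dig_diff_sums) auto
    have v: "(Digamma (2/3) - Digamma (1/3)) + (Digamma (5/6) - Digamma (7/6::real)) = Eval"
      unfolding Dig_13 Dig_16 Eval_def by (simp add: field_simps)
    show ?thesis using s unfolding v .
  qed
  have t1: "(\<lambda>j. 1 / (real j + 1/3)\<^sup>2 + 1 / (real j + 2/3)\<^sup>2) sums (4 * pi\<^sup>2 / 3)"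
    unfolding Tri_13[symmetric] by (intro sums_add trig_sums) auto
  have t2: "(\<lambda>j. 1 / (real j + 5/6)\<^sup>2 + 1 / (real j + 7/6)\<^sup>2) sums (4 * pi\<^sup>2 - 36)"
    unfolding Tri_56[symmetric] by (intro sums_add trig_sums) auto
  have t3: "(\<lambda>j. 1 / (real j + 1/2)\<^sup>2) sums (pi\<^sup>2 / 2)"
    unfolding Tri_12[symmetric] by (intro trig_sums) auto
  have t4: "(\<lambda>j. 1 / (real j + 1)\<^sup>2) sums (pi\<^sup>2 / 6)"
    using inverse_squares_sums by (simp add: add.commute)
  have all: "(\<lambda>j. 2 * (1 / (real j + 1/3)\<^sup>2 + 1 / (real j + 2/3)\<^sup>2) - 2 * (1 / (real j + 5/6)\<^sup>2 + 1 / (real j + 7/6)\<^sup>2)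
      + 4 * (1 / (real j + 1/2)\<^sup>2) - 4 * (1 / (real j + 1)\<^sup>2)
      - 24 * ((1 / (real j + 1/3) - 1 / (real j + 2/3)) + (1 / (real j + 7/6) - 1 / (real j + 5/6))))
    sums (2 * (4 * pi\<^sup>2 / 3) - 2 * (4 * pi\<^sup>2 - 36) + 4 * (pi\<^sup>2 / 2) - 4 * (pi\<^sup>2 / 6) - 24 * Eval)"
    by (intro sums_diff sums_add sums_mult t1 t2 t3 t4 d)
  have v: "2 * (4 * pi\<^sup>2 / 3) - 2 * (4 * pi\<^sup>2 - 36) + 4 * (pi\<^sup>2 / 2) - 4 * (pi\<^sup>2 / 6) - 24 * Eval = Qval"
    unfolding Qval_def by (simp add: field_simps)
  show ?thesis using all unfolding v pent_vals
    by (subst m2_term) auto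
qed



lemma Sup_unbdd_real: "\<not> bdd_above (S::real set) \<Longrightarrow> Sup S = (LEAST z::real. False)"
proof -
  assume "\<not> bdd_above S"
  hence "(\<lambda>z. \<forall>x\<in>S. x \<le> z) = (\<lambda>z. False)" by (force simp: bdd_above_def fun_eq_iff)
  thus ?thesis unfolding Sup_real_def by simp
qed

definition supX :: "(nat \<Rightarrow> 'a \<Rightarrow> real) \<Rightarrow> 'a \<Rightarrow> real" where
  "supX X \<omega> = (SUP i\<in>{1..}. X i \<omega>)"

lemma supX_le_iff:
  assumes "bdd_above ((\<lambda>i. X i \<omega>) ` {1..})"
  shows "supX X \<omega> \<le> t \<longleftrightarrow> (\<forall>i\<in>{1..}. X i \<omega> \<le> t)"
  unfolding supX_def by (rule cSUP_le_iff) (use assms in auto)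

lemma supX_ge:
  assumes "bdd_above ((\<lambda>i. X i \<omega>) ` {1..})" "i \<ge> 1"
  shows "X i \<omega> \<le> supX X \<omega>"
  unfolding supX_def by (rule cSUP_upper) (use assms in auto)

lemma supX_unbdd:
  assumes "\<not> bdd_above ((\<lambda>i. X i \<omega>) ` {1..})"
  shows "supX X \<omega> = (LEAST z::real. False)"
  unfolding supX_def using Sup_unbdd_real[OF assms] .

lemma bdd_iff_nat:
  "bdd_above ((\<lambda>i. X i \<omega>) ` {1..}) \<longleftrightarrow> (\<exists>n::nat. \<forall>i\<in>{1..}. X i \<omega> \<le> real n)"
proof
  assume "bdd_above ((\<lambda>i. X i \<omega>) ` {1..})"
  then obtain b where b: "\<And>i. i \<in> {1..} \<Longrightarrow> X i \<omega> \<le> b" by (auto simp: bdd_above_def)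
  obtain n :: nat where "b \<le> real n" using real_arch_simple by blast
  with b show "\<exists>n::nat. \<forall>i\<in>{1..}. X i \<omega> \<le> real n" by (meson order_trans)
next
  assume "\<exists>n::nat. \<forall>i\<in>{1..}. X i \<omega> \<le> real n"
  thus "bdd_above ((\<lambda>i. X i \<omega>) ` {1..})" by (auto simp: bdd_above_def)
qed

context prob_space
begin

lemma sets_all_le:
  fixes X :: "nat \<Rightarrow> 'a \<Rightarrow> real" and I :: "nat set"
  assumes "\<And>i. i \<in> I \<Longrightarrow> X i \<in> borel_measurable M"
  shows "{\<omega>\<in>space M. \<forall>i\<in>I. X i \<omega> \<le> t} \<in> sets M"
proof (cases "I = {}")
  case True thus ?thesis by simp
next
  case False
  have "{\<omega>\<in>space M. \<forall>i\<in>I. X i \<omega> \<le> t} = (\<Inter>i\<in>I. {\<omega>\<in>space M. X i \<omega> \<le> t})"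
    using False by auto
  also have "\<dots> \<in> sets M"
  proof (rule sets.countable_INT')
    show "countable I" by simp
    show "I \<noteq> {}" by fact
    show "(\<lambda>i. {\<omega>\<in>space M. X i \<omega> \<le> t}) ` I \<subseteq> sets M"
    proof safe
      fix i assume "i \<in> I"
      hence [measurable]: "X i \<in> borel_measurable M" by (rule assms)
      show "{\<omega>\<in>space M. X i \<omega> \<le> t} \<in> sets M" by measurable
    qed
  qed
  finally show ?thesis .
qed

lemma Xmeas:
  assumes dist: "\<And>i. i \<ge> 1 \<Longrightarrow> distributed M lborel (X i) (exponential_density (real i))"
    and "i \<ge> 1"
  shows "X i \<in> borel_measurable M"
  using exponential_distributed_iff[of "real i" "X i"] dist[OF assms(2)] assms(2) by simp

lemma prob_le_fin:
  assumes ind: "indep_vars (\<lambda>_. borel) X {1..}"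
    and dist: "\<And>i. i \<ge> 1 \<Longrightarrow> distributed M lborel (X i) (exponential_density (real i))"
    and t: "t \<ge> 0"
  shows "prob {\<omega>\<in>space M. \<forall>i\<in>{1..n}. X i \<omega> \<le> t} = (\<Prod>i\<in>{1..n}. 1 - exp (-t) ^ i)"
proof (cases "n = 0")
  case True thus ?thesis by (simp add: prob_space)
next
  case False
  have eq: "{\<omega>\<in>space M. \<forall>i\<in>{1..n}. X i \<omega> \<le> t} = (\<Inter>i\<in>{1..n}. X i -` {..t} \<inter> space M)"
    using False by auto
  have "prob (\<Inter>i\<in>{1..n}. X i -` {..t} \<inter> space M) = (\<Prod>i\<in>{1..n}. prob (X i -` {..t} \<inter> space M))"
    by (rule indep_varsD[OF ind]) (use False in auto)
  also have "\<dots> = (\<Prod>i\<in>{1..n}. 1 - exp (-t) ^ i)"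
  proof (rule prod.cong[OF refl])
    fix i assume i: "i \<in> {1..n}"
    have "X i -` {..t} \<inter> space M = {x\<in>space M. X i x \<le> t}" by auto
    hence "prob (X i -` {..t} \<inter> space M) = 1 - exp (- t * real i)"
      using exponential_distributedD_le[OF dist[of i] t] i by simp
    also have "exp (- t * real i) = exp (-t) ^ i"
      by (subst exp_of_nat_mult[symmetric]) (simp add: mult.commute)
    finally show "prob (X i -` {..t} \<inter> space M) = 1 - exp (-t) ^ i" .
  qed
  finally show ?thesis using eq by simp
qed

lemma prob_le_lim:
  assumes ind: "indep_vars (\<lambda>_. borel) X {1..}"
    and dist: "\<And>i. i \<ge> 1 \<Longrightarrow> distributed M lborel (X i) (exponential_density (real i))"
    and t: "t \<ge> 0"
  shows "(\<lambda>n. \<Prod>i\<in>{1..n}. 1 - exp (-t) ^ i) \<longlonglongrightarrow> prob {\<omega>\<in>space M. \<forall>i\<in>{1..}. X i \<omega> \<le> t}"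
proof -
  have [measurable]: "X i \<in> borel_measurable M" if "i \<ge> 1" for i using Xmeas[OF dist that] .
  define A where "A n = {\<omega>\<in>space M. \<forall>i\<in>{1..n}. X i \<omega> \<le> t}" for n
  have As: "A n \<in> sets M" for n
    unfolding A_def by (rule sets_all_le) (auto intro: Xmeas[OF dist])
  have "(\<lambda>n. measure M (A n)) \<longlonglongrightarrow> measure M (\<Inter>n. A n)"
    by (rule finite_Lim_measure_decseq) (use As in \<open>auto simp: decseq_def A_def\<close>)
  moreover have "(\<Inter>n. A n) = {\<omega>\<in>space M. \<forall>i\<in>{1..}. X i \<omega> \<le> t}"
    unfolding A_def by (auto; meson atLeastAtMost_iff order_refl)
  moreover have "measure M (A n) = (\<Prod>i\<in>{1..n}. 1 - exp (-t) ^ i)" for n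
    unfolding A_def by (rule prob_le_fin[OF ind dist t])
  ultimately show ?thesis by simp
qed

lemma AE_nonneg:
  assumes dist: "\<And>i. i \<ge> 1 \<Longrightarrow> distributed M lborel (X i) (exponential_density (real i))"
  shows "AE \<omega> in M. \<forall>i\<in>{1..}. 0 \<le> X i \<omega>"
proof -
  have "AE \<omega> in M. i \<in> {1..} \<longrightarrow> 0 \<le> X i \<omega>" for i
  proof (cases "i \<ge> 1")
    case True
    have "prob {\<omega>\<in>space M. 0 < X i \<omega>} = 1"
      using exponential_distributedD_gt[OF dist[OF True], of 0] True by simp
    hence "AE \<omega> in M. \<omega> \<in> {\<omega>\<in>space M. 0 < X i \<omega>}" by (rule AE_prob_1)
    thus ?thesis by eventually_elim auto
  qed simp
  hence "AE \<omega> in M. \<forall>i. i \<in> {1..} \<longrightarrow> 0 \<le> X i \<omega>" by (subst AE_all_countable) simp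
  thus ?thesis by (simp add: Ball_def)
qed

lemma AE_bdd:
  assumes dist: "\<And>i. i \<ge> 1 \<Longrightarrow> distributed M lborel (X i) (exponential_density (real i))"
  shows "AE \<omega> in M. bdd_above ((\<lambda>i. X i \<omega>) ` {1..})"
proof -
  have [measurable]: "X i \<in> borel_measurable M" if "i \<ge> 1" for i using Xmeas[OF dist that] .
  define A where "A n = {\<omega>\<in>space M. 1 < X (Suc n) \<omega>}" for n
  have As: "A n \<in> sets M" for n
  proof -
    have [measurable]: "X (Suc n) \<in> borel_measurable M" using Xmeas[OF dist, of "Suc n"] by simp
    show ?thesis unfolding A_def by measurable
  qed
  have pA: "measure M (A n) = exp (-1) ^ Suc n" for n
  proof -
    have d: "distributed M lborel (X (Suc n)) (exponential_density (real (Suc n)))" by (rule dist) simp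
    have "measure M (A n) = exp (- 1 * real (Suc n))"
      unfolding A_def using exponential_distributedD_gt[OF d, of 1] by simp
    also have "\<dots> = exp (-1) ^ Suc n"
      by (subst exp_of_nat_mult[symmetric]) (simp add: mult.commute)
    finally show ?thesis .
  qed
  have "summable (\<lambda>n. exp (-1) * exp (-1::real) ^ n)" by (intro summable_mult summable_geometric) simp
  hence "summable (\<lambda>n. measure M (A n))"
    unfolding pA by simp
  hence "AE \<omega> in M. eventually (\<lambda>n. \<omega> \<in> space M - A n) sequentially"
    by (intro borel_cantelli_AE1 As) (simp_all add: emeasure_eq_measure)
  thus ?thesis
  proof eventually_elim
    case (elim \<omega>)
    then obtain N where N: "\<And>n. n \<ge> N \<Longrightarrow> \<omega> \<in> space M - A n" by (auto simp: eventually_sequentially)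
    show ?case unfolding bdd_above_def
    proof (intro exI ballI)
      fix y assume "y \<in> (\<lambda>i. X i \<omega>) ` {1..}"
      then obtain i where i: "i \<ge> 1" "y = X i \<omega>" by auto
      show "y \<le> 1 + (\<Sum>j\<in>{1..N}. \<bar>X j \<omega>\<bar>)"
      proof (cases "i \<le> N")
        case True
        have "X i \<omega> \<le> \<bar>X i \<omega>\<bar>" by simp
        also have "\<dots> \<le> (\<Sum>j\<in>{1..N}. \<bar>X j \<omega>\<bar>)"
          by (rule member_le_sum) (use True i in auto)
        finally show ?thesis using i by simp
      next
        case False
        then obtain n where n: "i = Suc n" "n \<ge> N" using i by (cases i) auto
        hence "X i \<omega> \<le> 1" using N[OF n(2)] unfolding A_def by auto
        moreover have "0 \<le> (\<Sum>j\<in>{1..N}. \<bar>X j \<omega>\<bar>)" by (simp add: sum_nonneg)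
        ultimately show ?thesis using i by linarith
      qed
    qed
  qed
qed

lemma supX_meas:
  assumes dist: "\<And>i. i \<ge> 1 \<Longrightarrow> distributed M lborel (X i) (exponential_density (real i))"
  shows "supX X \<in> borel_measurable M"
proof (rule borel_measurableI_le)
  fix y :: real
  have Xm: "\<And>i. i \<in> {1..} \<Longrightarrow> X i \<in> borel_measurable M" using Xmeas[OF dist] by auto
  define B where "B = {\<omega>\<in>space M. bdd_above ((\<lambda>i. X i \<omega>) ` {1..})}"
  have "B = (\<Union>n::nat. {\<omega>\<in>space M. \<forall>i\<in>{1..}. X i \<omega> \<le> real n})"
    unfolding B_def bdd_iff_nat by auto
  also have "\<dots> \<in> sets M"
  proof (rule sets.countable_UN)
    have "{\<omega>\<in>space M. \<forall>i\<in>{1..}. X i \<omega> \<le> real n} \<in> sets M" for n by (rule sets_all_le[OF Xm])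
    thus "range (\<lambda>n::nat. {\<omega>\<in>space M. \<forall>i\<in>{1..}. X i \<omega> \<le> real n}) \<subseteq> sets M" by blast
  qed
  finally have Bs: "B \<in> sets M" .
  have "{\<omega>\<in>space M. supX X \<omega> \<le> y} =
     (B \<inter> {\<omega>\<in>space M. \<forall>i\<in>{1..}. X i \<omega> \<le> y}) \<union> ((space M - B) \<inter> (if (LEAST z::real. False) \<le> y then space M else {}))"
    (is "?L = ?R")
  proof -
    have "\<omega> \<in> ?L \<longleftrightarrow> \<omega> \<in> ?R" for \<omega>
      by (cases "bdd_above ((\<lambda>i. X i \<omega>) ` {1..})") (auto simp: B_def supX_le_iff supX_unbdd)
    thus ?thesis by blast
  qed
  also have "\<dots> \<in> sets M" using Bs sets_all_le[OF Xm] by auto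
  finally show "{\<omega>\<in>space M. supX X \<omega> \<le> y} \<in> sets M" .
qed

end


declare pa.simps[simp del]

lemma exp_pow_eq: "exp (-x) ^ k = exp (- (real k * x))"
  by (subst exp_of_nat_mult[symmetric]) simp

lemma exp_mom:
  fixes k i :: nat assumes k: "k > 0" and that: "c \<ge> 0"
  shows "(\<integral>\<^sup>+x. ennreal (c * x ^ i * indicator {0<..} x * exp (-x) ^ k) \<partial>lborel) = ennreal (c * fact i / real k ^ (i + 1))"
proof -
  define l where "l = real k"
  have l: "l > 0" using k by (simp add: l_def)
  have "(\<integral>\<^sup>+x. ennreal (c * x ^ i * indicator {0<..} x * exp (-x) ^ k) \<partial>lborel)
      = (\<integral>\<^sup>+x. ennreal (c / l) * ennreal (erlang_density 0 l x * x ^ i) \<partial>lborel)"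
  proof (rule nn_integral_cong_AE)
    show "AE x in lborel. ennreal (c * x ^ i * indicator {0<..} x * exp (-x) ^ k) = ennreal (c / l) * ennreal (erlang_density 0 l x * x ^ i)"
      using AE_lborel_singleton[of 0]
    proof eventually_elim
      case (elim x)
      show ?case
      proof (cases "x > 0")
        case True
        have "c * x ^ i * indicator {0<..} x * exp (-x) ^ k = (c / l) * (erlang_density 0 l x * x ^ i)"
          using True l by (simp add: erlang_density_def exp_pow_eq l_def field_simps)
        hence "ennreal (c * x ^ i * indicator {0<..} x * exp (-x) ^ k) = ennreal ((c / l) * (erlang_density 0 l x * x ^ i))"
          by (simp only:)
        also have "\<dots> = ennreal (c / l) * ennreal (erlang_density 0 l x * x ^ i)"
          by (rule ennreal_mult') (use l that in simp)
        finally show ?thesis .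
      next
        case False
        with elim have "x < 0" by simp
        thus ?thesis by (simp add: erlang_density_def)
      qed
    qed
  qed
  also have "\<dots> = ennreal (c / l) * (\<integral>\<^sup>+x. ennreal (erlang_density 0 l x * x ^ i) \<partial>lborel)"
    by (rule nn_integral_cmult) simp
  also have "(\<integral>\<^sup>+x. ennreal (erlang_density 0 l x * x ^ i) \<partial>lborel) = ennreal (fact i / l ^ i)"
    using nn_integral_erlang_ith_moment[OF l, of 0 i] by simp
  also have "ennreal (c / l) * ennreal (fact i / l ^ i) = ennreal (c * fact i / real k ^ (i + 1))"
    using l that by (simp add: ennreal_mult''[symmetric] l_def field_simps)
  finally show ?thesis .
qed

lemma nn_diff:
  fixes f g :: "real \<Rightarrow> real"
  assumes [measurable]: "f \<in> borel_measurable borel" "g \<in> borel_measurable borel"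
    and "\<And>t. 0 \<le> g t" "\<And>t. g t \<le> f t"
    and If: "(\<integral>\<^sup>+t. ennreal (f t) \<partial>lborel) = ennreal a"
    and Ig: "(\<integral>\<^sup>+t. ennreal (g t) \<partial>lborel) = ennreal b" "b \<ge> 0"
  shows "(\<integral>\<^sup>+t. ennreal (f t - g t) \<partial>lborel) = ennreal (a - b)"
proof -
  have "(\<integral>\<^sup>+t. ennreal (f t - g t) \<partial>lborel) + (\<integral>\<^sup>+t. ennreal (g t) \<partial>lborel)
      = (\<integral>\<^sup>+t. ennreal (f t - g t) + ennreal (g t) \<partial>lborel)"
    by (rule nn_integral_add[symmetric]) auto
  also have "\<dots> = (\<integral>\<^sup>+t. ennreal (f t) \<partial>lborel)"
    using assms(3,4) by (intro nn_integral_cong) (simp add: ennreal_plus[symmetric] del: ennreal_plus)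
  finally have e: "(\<integral>\<^sup>+t. ennreal (f t - g t) \<partial>lborel) + ennreal b = ennreal a" using If Ig by simp
  hence "(\<integral>\<^sup>+t. ennreal (f t - g t) \<partial>lborel) = ennreal a - ennreal b"
    by (metis ennreal_add_diff_cancel_right ennreal_neq_top)
  also have "\<dots> = ennreal (a - b)" using Ig(2) by (simp add: ennreal_minus)
  finally show ?thesis .
qed

definition cterm :: "real \<Rightarrow> nat \<Rightarrow> real" where
  "cterm t j = (exp (-t) ^ pb (2*j+1) + exp (-t) ^ pa (2*j+1)) - (exp (-t) ^ pb (2*j+2) + exp (-t) ^ pa (2*j+2))"

lemma pent_mono: "pb (2*j+1) \<le> pb (2*j+2)" "pa (2*j+1) \<le> pa (2*j+2)"
proof -
  have "real (pb (2*j+1)) \<le> real (pb (2*j+2))" "real (pa (2*j+1)) \<le> real (pa (2*j+2))"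
    unfolding pent_vals by (simp_all add: algebra_simps)
  thus "pb (2*j+1) \<le> pb (2*j+2)" "pa (2*j+1) \<le> pa (2*j+2)" by simp_all
qed

lemma pent_pos: "pb (2*j+1) > 0" "pa (2*j+1) > 0" "pb (2*j+2) > 0" "pa (2*j+2) > 0"
proof -
  have "real (pb (2*j+1)) > 0" "real (pa (2*j+1)) > 0" "real (pb (2*j+2)) > 0" "real (pa (2*j+2)) > 0"
    unfolding pent_vals by (auto intro!: mult_pos_pos add_pos_nonneg)
  thus "pb (2*j+1) > 0" "pa (2*j+1) > 0" "pb (2*j+2) > 0" "pa (2*j+2) > 0" by simp_all
qed

lemma cterm_nonneg: "t \<ge> 0 \<Longrightarrow> 0 \<le> cterm t j"
proof -
  assume t: "t \<ge> 0"
  have q: "0 \<le> exp (-t)" "exp (-t) \<le> 1" using t by auto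
  have "exp (-t) ^ pb (2*j+2) \<le> exp (-t) ^ pb (2*j+1)" "exp (-t) ^ pa (2*j+2) \<le> exp (-t) ^ pa (2*j+1)"
    using power_decreasing[OF pent_mono(1) q] power_decreasing[OF pent_mono(2) q] by auto
  thus ?thesis unfolding cterm_def by simp
qed

lemma nn_two:
  fixes f g :: "real \<Rightarrow> real"
  assumes [measurable]: "f \<in> borel_measurable borel" "g \<in> borel_measurable borel"
    and "\<And>t. 0 \<le> f t" "\<And>t. 0 \<le> g t"
  shows "(\<integral>\<^sup>+t. ennreal (f t + g t) \<partial>lborel) = (\<integral>\<^sup>+t. ennreal (f t) \<partial>lborel) + (\<integral>\<^sup>+t. ennreal (g t) \<partial>lborel)"
  using assms by (subst nn_integral_add[symmetric]) (auto intro!: nn_integral_cong simp: ennreal_plus)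

lemma meas_expn: "(\<lambda>x::real. exp (-x) ^ n) \<in> borel_measurable borel"
  by (intro borel_measurable_continuous_onI continuous_intros)

lemma meas_wexp: "w \<in> borel_measurable borel \<Longrightarrow> (\<lambda>t::real. w t * exp (-t) ^ n) \<in> borel_measurable (borel :: real measure)"
  by (intro borel_measurable_times meas_expn)

lemma series_integral:
  fixes c :: real and i :: nat and G :: "real \<Rightarrow> real"
  assumes c: "c \<ge> 0"
    and Gs: "\<And>t. t > 0 \<Longrightarrow> (\<lambda>j. cterm t j) sums G t"
    and S: "(\<lambda>j. (c * fact i / real (pb (2*j+1)) ^ (i+1) + c * fact i / real (pa (2*j+1)) ^ (i+1))
              - (c * fact i / real (pb (2*j+2)) ^ (i+1) + c * fact i / real (pa (2*j+2)) ^ (i+1))) sums V"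
  shows "(\<integral>\<^sup>+t. ennreal (c * t ^ i * indicator {0<..} t * G t) \<partial>lborel) = ennreal V"
proof -
  define mu where "mu k = c * fact i / real k ^ (i+1)" for k :: nat
  define w where "w t = c * t ^ i * indicator {0<..} t" for t :: real
  have w0: "0 \<le> w t" for t using c by (auto simp: w_def split: split_indicator)
  have [measurable]: "w \<in> borel_measurable borel" unfolding w_def by measurable
  define tm where "tm j = (mu (pb (2*j+1)) + mu (pa (2*j+1))) - (mu (pb (2*j+2)) + mu (pa (2*j+2)))" for j
  have mu_mono: "mu b \<le> mu a" if "0 < a" "a \<le> b" for a b
    unfolding mu_def using that c
    by (intro divide_left_mono mult_nonneg_nonneg power_mono mult_pos_pos) auto
  have tm0: "0 \<le> tm j" for j
    unfolding tm_def using mu_mono[OF pent_pos(1) pent_mono(1), of j] mu_mono[OF pent_pos(2) pent_mono(2), of j] by linarith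
  have tms: "tm sums V" using S unfolding tm_def mu_def .
  have pt: "ennreal (w t * G t) = (\<Sum>j. ennreal (w t * cterm t j))" for t
  proof (cases "t > 0")
    case True
    have "(\<lambda>j. w t * cterm t j) sums (w t * G t)" by (rule sums_mult[OF Gs[OF True]])
    moreover have "0 \<le> w t * cterm t j" for j using w0 cterm_nonneg[of t j] True by simp
    ultimately show ?thesis by (simp add: suminf_ennreal2 sums_iff)
  next
    case False
    thus ?thesis by (simp add: w_def)
  qed
  have "(\<integral>\<^sup>+t. ennreal (c * t ^ i * indicator {0<..} t * G t) \<partial>lborel) = (\<integral>\<^sup>+t. (\<Sum>j. ennreal (w t * cterm t j)) \<partial>lborel)"
  proof (intro nn_integral_cong)
    fix t :: real
    show "ennreal (c * t ^ i * indicator {0<..} t * G t) = (\<Sum>j. ennreal (w t * cterm t j))"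
      using pt[of t] unfolding w_def .
  qed
  also have "\<dots> = (\<Sum>j. (\<integral>\<^sup>+t. ennreal (w t * cterm t j) \<partial>lborel))"
    by (rule nn_integral_suminf) (simp add: cterm_def)
  also have "\<dots> = (\<Sum>j. ennreal (tm j))"
  proof (rule suminf_cong)
    fix j
    have ex: "(\<integral>\<^sup>+t. ennreal (w t * exp (-t) ^ k) \<partial>lborel) = ennreal (mu k)" if "k > 0" for k
      using exp_mom[OF that c, of i] unfolding w_def mu_def by (simp add: mult_ac)
    define f where "f t = w t * exp (-t) ^ pb (2*j+1) + w t * exp (-t) ^ pa (2*j+1)" for t
    define g where "g t = w t * exp (-t) ^ pb (2*j+2) + w t * exp (-t) ^ pa (2*j+2)" for t
    have If: "(\<integral>\<^sup>+t. ennreal (f t) \<partial>lborel) = ennreal (mu (pb (2*j+1)) + mu (pa (2*j+1)))"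
      unfolding f_def using w0 pent_pos mu_mono
      by (subst nn_two) (auto simp: ex ennreal_plus[symmetric] mu_def c simp del: ennreal_plus)
    have Ig: "(\<integral>\<^sup>+t. ennreal (g t) \<partial>lborel) = ennreal (mu (pb (2*j+2)) + mu (pa (2*j+2)))"
      unfolding g_def using w0 pent_pos
      by (subst nn_two) (auto simp: ex ennreal_plus[symmetric] mu_def c simp del: ennreal_plus)
    have "(\<integral>\<^sup>+t. ennreal (f t - g t) \<partial>lborel) = ennreal (tm j)"
      unfolding tm_def
    proof (rule nn_diff[OF _ _ _ _ If Ig])
      show "f \<in> borel_measurable borel" "g \<in> borel_measurable borel" unfolding f_def g_def
        by (intro borel_measurable_add meas_wexp; simp)+
      show "0 \<le> g t" for t unfolding g_def using w0[of t] by simp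
      show "g t \<le> f t" for t
      proof (cases "t > 0")
        case True
        have "w t * (exp (-t) ^ pb (2*j+2) + exp (-t) ^ pa (2*j+2)) \<le> w t * (exp (-t) ^ pb (2*j+1) + exp (-t) ^ pa (2*j+1))"
          by (rule mult_left_mono) (use cterm_nonneg[of t j] w0[of t] True in \<open>auto simp: cterm_def\<close>)
        thus ?thesis unfolding f_def g_def by (simp only: distrib_left)
      next
        case False thus ?thesis by (simp add: f_def g_def w_def)
      qed
      show "0 \<le> mu (pb (2*j+2)) + mu (pa (2*j+2))" unfolding mu_def using c by simp
    qed
    moreover have "f t - g t = w t * cterm t j" for t unfolding f_def g_def cterm_def by (simp add: algebra_simps)
    ultimately show "(\<integral>\<^sup>+t. ennreal (w t * cterm t j) \<partial>lborel) = ennreal (tm j)" by simp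
  qed
  also have "\<dots> = ennreal V"
    using tms tm0 by (simp add: suminf_ennreal2 sums_iff)
  finally show ?thesis .
qed



context prob_space
begin

lemma tail_sums:
  assumes ind: "indep_vars (\<lambda>_. borel) X {1..}"
    and dist: "\<And>i. i \<ge> 1 \<Longrightarrow> distributed M lborel (X i) (exponential_density (real i))"
    and t: "t > 0"
  shows "(\<lambda>j. cterm t j) sums prob {\<omega>\<in>space M. t < supX X \<omega>}"
proof -
  define Ft where "Ft = prob {\<omega>\<in>space M. \<forall>i\<in>{1..}. X i \<omega> \<le> t}"
  have lim: "(\<lambda>n. \<Prod>i\<in>{1..n}. 1 - exp (-t) ^ i) \<longlonglongrightarrow> Ft"
    unfolding Ft_def by (rule prob_le_lim[OF ind dist less_imp_le[OF t]])
  have s: "(\<lambda>j. cterm t j) sums (1 - Ft)"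
    unfolding cterm_def by (rule pent_sums[OF _ _ lim]) (use t in simp_all)
  have Xm: "\<And>i. i \<in> {1..} \<Longrightarrow> X i \<in> borel_measurable M" using Xmeas[OF dist] by auto
  have [measurable]: "supX X \<in> borel_measurable M" by (rule supX_meas[OF dist])
  have bd: "AE \<omega> in M. bdd_above ((\<lambda>i. X i \<omega>) ` {1..})"
    by (rule AE_bdd) (rule dist)
  have "prob {\<omega>\<in>space M. supX X \<omega> \<le> t} = Ft"
    unfolding Ft_def
  proof (rule measure_eq_AE)
    show "AE \<omega> in M. (\<omega> \<in> {\<omega>\<in>space M. supX X \<omega> \<le> t}) = (\<omega> \<in> {\<omega>\<in>space M. \<forall>i\<in>{1..}. X i \<omega> \<le> t})"
      using bd by eventually_elim (auto simp: supX_le_iff)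
    show "{\<omega>\<in>space M. supX X \<omega> \<le> t} \<in> sets M" by measurable
    show "{\<omega>\<in>space M. \<forall>i\<in>{1..}. X i \<omega> \<le> t} \<in> sets M" by (rule sets_all_le[OF Xm])
  qed
  moreover have "{\<omega>\<in>space M. t < supX X \<omega>} = space M - {\<omega>\<in>space M. supX X \<omega> \<le> t}" by auto
  moreover have "{\<omega>\<in>space M. supX X \<omega> \<le> t} \<in> sets M" by measurable
  ultimately have "prob {\<omega>\<in>space M. t < supX X \<omega>} = 1 - Ft" by (simp add: prob_compl)
  with s show ?thesis by simp
qed

lemma tonelli_tail:
  fixes Y :: "'a \<Rightarrow> real" and h H :: "real \<Rightarrow> real"
  assumes Y[measurable]: "Y \<in> borel_measurable M" and Y0: "AE \<omega> in M. 0 \<le> Y \<omega>"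
    and h[measurable]: "h \<in> borel_measurable borel"
    and Hd: "\<And>x. x \<ge> 0 \<Longrightarrow> (\<integral>\<^sup>+t. ennreal (h t) * indicator {0..x} t \<partial>lborel) = ennreal (H x)"
  shows "(\<integral>\<^sup>+\<omega>. ennreal (H (Y \<omega>)) \<partial>M) =
     (\<integral>\<^sup>+t. ennreal (h t) * indicator {0<..} t * emeasure M {\<omega>\<in>space M. t < Y \<omega>} \<partial>lborel)"
proof -
  define f where "f \<omega> t = (if 0 < t \<and> t < Y \<omega> then ennreal (h t) else 0)" for \<omega> t
  have fm: "(\<lambda>(\<omega>, t). f \<omega> t) \<in> borel_measurable (M \<Otimes>\<^sub>M lborel)"
    unfolding f_def by measurable
  have "(\<integral>\<^sup>+\<omega>. ennreal (H (Y \<omega>)) \<partial>M) = (\<integral>\<^sup>+\<omega>. (\<integral>\<^sup>+t. f \<omega> t \<partial>lborel) \<partial>M)"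
  proof (rule nn_integral_cong_AE)
    show "AE \<omega> in M. ennreal (H (Y \<omega>)) = (\<integral>\<^sup>+t. f \<omega> t \<partial>lborel)"
      using Y0
    proof eventually_elim
      case (elim \<omega>)
      have "(\<integral>\<^sup>+t. f \<omega> t \<partial>lborel) = (\<integral>\<^sup>+t. ennreal (h t) * indicator {0..Y \<omega>} t \<partial>lborel)"
      proof (rule nn_integral_cong_AE)
        show "AE t in lborel. f \<omega> t = ennreal (h t) * indicator {0..Y \<omega>} t"
          using AE_lborel_singleton[of 0] AE_lborel_singleton[of "Y \<omega>"]
          by eventually_elim (auto simp: f_def split: split_indicator)
      qed
      also have "\<dots> = ennreal (H (Y \<omega>))" by (rule Hd[OF elim])
      finally show ?case by simp
    qed
  qed
  also have "\<dots> = (\<integral>\<^sup>+t. (\<integral>\<^sup>+\<omega>. f \<omega> t \<partial>M) \<partial>lborel)"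
  proof -
    interpret PS: pair_sigma_finite M lborel
      by (intro pair_sigma_finite.intro sigma_finite_measure_axioms lborel.sigma_finite_measure_axioms)
    show ?thesis by (rule PS.Fubini'[OF fm, symmetric])
  qed
  also have "\<dots> = (\<integral>\<^sup>+t. ennreal (h t) * indicator {0<..} t * emeasure M {\<omega>\<in>space M. t < Y \<omega>} \<partial>lborel)"
  proof (rule nn_integral_cong)
    fix t :: real
    have "(\<integral>\<^sup>+\<omega>. f \<omega> t \<partial>M) = (\<integral>\<^sup>+\<omega>. (ennreal (h t) * indicator {0<..} t) * indicator {\<omega>\<in>space M. t < Y \<omega>} \<omega> \<partial>M)"
      by (rule nn_integral_cong) (auto simp: f_def split: split_indicator)
    also have "\<dots> = (ennreal (h t) * indicator {0<..} t) * emeasure M {\<omega>\<in>space M. t < Y \<omega>}"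
      by (rule nn_integral_cmult_indicator) measurable
    finally show "(\<integral>\<^sup>+\<omega>. f \<omega> t \<partial>M) = ennreal (h t) * indicator {0<..} t * emeasure M {\<omega>\<in>space M. t < Y \<omega>}" .
  qed
  finally show ?thesis .
qed

end


declare pa.simps[simp del]

lemma inv_mono_nat: "0 < a \<Longrightarrow> a \<le> b \<Longrightarrow> c \<ge> 0 \<Longrightarrow> c / real b ^ n \<le> c / real (a::nat) ^ n"
  by (rule divide_left_mono) (auto intro!: power_mono)

lemma Eval_nonneg: "Eval \<ge> 0"
proof (rule sums_le[OF _ sums_zero m1_sums])
  fix j
  have "1 / real (pb (2*j+2)) \<le> 1 / real (pb (2*j+1))" "1 / real (pa (2*j+2)) \<le> 1 / real (pa (2*j+1))"
    using inv_mono_nat[OF pent_pos(1)[of j] pent_mono(1)[of j], where c=1 and n=1] inv_mono_nat[OF pent_pos(2)[of j] pent_mono(2)[of j], where c=1 and n=1] by simp_all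
  thus "0 \<le> (1 / real (pb (2*j+1)) + 1 / real (pa (2*j+1))) - (1 / real (pb (2*j+2)) + 1 / real (pa (2*j+2)))"
    by simp
qed

lemma Qval_nonneg: "Qval \<ge> 0"
proof (rule sums_le[OF _ sums_zero m2_sums])
  fix j
  have "2 / (real (pb (2*j+2)))\<^sup>2 \<le> 2 / (real (pb (2*j+1)))\<^sup>2" "2 / (real (pa (2*j+2)))\<^sup>2 \<le> 2 / (real (pa (2*j+1)))\<^sup>2"
    using inv_mono_nat[OF pent_pos(1)[of j] pent_mono(1)[of j], where c=2 and n=2] inv_mono_nat[OF pent_pos(2)[of j] pent_mono(2)[of j], where c=2 and n=2] by simp_all
  thus "0 \<le> (2 / (real (pb (2*j+1)))\<^sup>2 + 2 / (real (pa (2*j+1)))\<^sup>2) - (2 / (real (pb (2*j+2)))\<^sup>2 + 2 / (real (pa (2*j+2)))\<^sup>2)"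
    by simp
qed

context prob_space
begin

lemma main_result:
  assumes ind: "indep_vars (\<lambda>_. borel) X {1..}"
    and dist: "\<And>i. i \<ge> 1 \<Longrightarrow> distributed M lborel (X i) (exponential_density (real i))"
  shows "integrable M (supX X) \<and> expectation (supX X) = Eval \<and> variance (supX X) = Qval - Eval\<^sup>2"
proof -
  have Ym[measurable]: "supX X \<in> borel_measurable M" by (rule supX_meas[OF dist])
  have bd: "AE \<omega> in M. bdd_above ((\<lambda>i. X i \<omega>) ` {1..})"
    by (rule AE_bdd) (rule dist)
  have nn: "AE \<omega> in M. \<forall>i\<in>{1..}. 0 \<le> X i \<omega>"
    by (rule AE_nonneg) (rule dist)
  have Y0: "AE \<omega> in M. 0 \<le> supX X \<omega>"
    using bd nn
  proof eventually_elim
    case (elim \<omega>)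
    have "0 \<le> X 1 \<omega>" using elim(2) by auto
    also have "\<dots> \<le> supX X \<omega>" by (rule supX_ge[of X \<omega> 1]) (use elim(1) in auto)
    finally show ?case .
  qed
  define G where "G t = prob {\<omega>\<in>space M. t < supX X \<omega>}" for t
  have Gs: "(\<lambda>j. cterm t j) sums G t" if "t > 0" for t
    unfolding G_def by (rule tail_sums[OF ind dist that])
  have em: "emeasure M {\<omega>\<in>space M. t < supX X \<omega>} = ennreal (G t)" for t
    unfolding G_def by (rule emeasure_eq_measure)
  have G0: "0 \<le> G t" for t unfolding G_def by simp

  have I1: "(\<integral>\<^sup>+\<omega>. ennreal (supX X \<omega>) \<partial>M) = ennreal Eval"
  proof -
    have "(\<integral>\<^sup>+\<omega>. ennreal ((\<lambda>x. x) (supX X \<omega>)) \<partial>M) =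
      (\<integral>\<^sup>+t. ennreal ((\<lambda>_. 1) t) * indicator {0<..} t * emeasure M {\<omega>\<in>space M. t < supX X \<omega>} \<partial>lborel)"
    proof (rule tonelli_tail[OF Ym Y0])
      show "(\<lambda>_. 1::real) \<in> borel_measurable borel" by simp
      fix x :: real assume "0 \<le> x"
      thus "(\<integral>\<^sup>+t. ennreal 1 * indicator {0..x} t \<partial>lborel) = ennreal x" by simp
    qed
    also have "\<dots> = (\<integral>\<^sup>+t. ennreal (1 * t ^ 0 * indicator {0<..} t * G t) \<partial>lborel)"
      by (intro nn_integral_cong) (auto simp: em split: split_indicator)
    also have "\<dots> = ennreal Eval"
    proof (rule series_integral[OF _ Gs])
      show "(\<lambda>j. (1 * fact 0 / real (pb (2*j+1)) ^ (0+1) + 1 * fact 0 / real (pa (2*j+1)) ^ (0+1))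
              - (1 * fact 0 / real (pb (2*j+2)) ^ (0+1) + 1 * fact 0 / real (pa (2*j+2)) ^ (0+1))) sums Eval"
        using m1_sums by simp
    qed auto
    finally show ?thesis by simp
  qed
  have int1: "integrable M (supX X)"
    by (rule integrableI_nonneg[OF Ym Y0]) (simp add: I1)
  have E1: "expectation (supX X) = Eval"
    using integral_eq_nn_integral[OF Ym Y0] I1 Eval_nonneg by simp

  have Y2m[measurable]: "(\<lambda>\<omega>. (supX X \<omega>)\<^sup>2) \<in> borel_measurable M" by measurable
  have Y20: "AE \<omega> in M. 0 \<le> (supX X \<omega>)\<^sup>2" by simp
  have I2: "(\<integral>\<^sup>+\<omega>. ennreal ((supX X \<omega>)\<^sup>2) \<partial>M) = ennreal Qval"
  proof -
    have "(\<integral>\<^sup>+\<omega>. ennreal ((\<lambda>x. x\<^sup>2) (supX X \<omega>)) \<partial>M) =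
      (\<integral>\<^sup>+t. ennreal ((\<lambda>t. 2 * t) t) * indicator {0<..} t * emeasure M {\<omega>\<in>space M. t < supX X \<omega>} \<partial>lborel)"
    proof (rule tonelli_tail[OF Ym Y0])
      show "(\<lambda>t. 2 * t::real) \<in> borel_measurable borel" by simp
      fix x :: real assume x: "0 \<le> x"
      have "(\<integral>\<^sup>+t. ennreal (2 * t) * indicator {0..x} t \<partial>lborel) = ennreal (x\<^sup>2 - 0\<^sup>2)"
        by (rule nn_integral_FTC_Icc[where F = "\<lambda>x. x\<^sup>2"]) (auto intro!: derivative_eq_intros simp: x)
      thus "(\<integral>\<^sup>+t. ennreal (2 * t) * indicator {0..x} t \<partial>lborel) = ennreal (x\<^sup>2)" by simp
    qed
    also have "\<dots> = (\<integral>\<^sup>+t. ennreal (2 * t ^ 1 * indicator {0<..} t * G t) \<partial>lborel)"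
      by (intro nn_integral_cong) (auto simp: em ennreal_mult G0 split: split_indicator)
    also have "\<dots> = ennreal Qval"
    proof (rule series_integral[OF _ Gs])
      show "(\<lambda>j. (2 * fact 1 / real (pb (2*j+1)) ^ (1+1) + 2 * fact 1 / real (pa (2*j+1)) ^ (1+1))
              - (2 * fact 1 / real (pb (2*j+2)) ^ (1+1) + 2 * fact 1 / real (pa (2*j+2)) ^ (1+1))) sums Qval"
        using m2_sums by (simp add: power2_eq_square)
    qed auto
    finally show ?thesis by simp
  qed
  have int2: "integrable M (\<lambda>\<omega>. (supX X \<omega>)\<^sup>2)"
    by (rule integrableI_nonneg[OF Y2m Y20]) (simp add: I2)
  have E2: "expectation (\<lambda>\<omega>. (supX X \<omega>)\<^sup>2) = Qval"
    using integral_eq_nn_integral[OF Y2m Y20] I2 Qval_nonneg by simp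
  have "variance (supX X) = Qval - Eval\<^sup>2"
    using variance_eq[OF int1 int2] E1 E2 by simp
  with int1 E1 show ?thesis by simp
qed

end

lemma final_value: "Qval - Eval\<^sup>2 = - 28 / 3 * pi\<^sup>2 - 16 * sqrt 3 * pi + 180"
  unfolding Qval_def Eval_def by (simp add: power2_eq_square algebra_simps)

theorem theorem1:
  fixes P :: "'a measure" and X :: "nat \<Rightarrow> 'a \<Rightarrow> real"
  assumes "prob_space P"
    and "prob_space.indep_vars P (\<lambda>_. borel) X {1..}"
    and "\<And>i. i \<ge> 1 \<Longrightarrow> distributed P lborel (X i) (exponential_density (real i))"
  defines "M \<equiv> (\<lambda>\<omega>. SUP i\<in>{1..}. X i \<omega>)"
  shows "integrable P M \<and>
         prob_space.expectation P M = 4 * sqrt 3 / 3 * pi - 6 \<and>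
         prob_space.variance P M = - 28 / 3 * pi\<^sup>2 - 16 * sqrt 3 * pi + 180"
proof -
  have Meq: "M = supX X" unfolding M_def supX_def by (rule ext) (rule refl)
  have R: "integrable P (supX X) \<and> prob_space.expectation P (supX X) = Eval \<and> prob_space.variance P (supX X) = Qval - Eval\<^sup>2"
    by (rule prob_space.main_result[OF assms(1) assms(2) assms(3)])
  hence i: "integrable P (supX X)" and e: "prob_space.expectation P (supX X) = Eval"
    and v: "prob_space.variance P (supX X) = Qval - Eval\<^sup>2" by blast+
  show ?thesis unfolding Meq using i e[unfolded Eval_def] trans[OF v final_value] by blast
qed



end
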